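(* Let $X$ be a separable real Banach space and let $(\Omega,\beta,\mu)$ be a complete probability measure space. Let $T:\Omega\times X\to X$ be a continuous random mapping such that there are real-valued random variables $\alpha_4,\alpha_5:\Omega\to[0,\infty)$ with $\alpha_4(\omega)+\alpha_5(\omega)<1$ for all $\omega\in\Omega$ and, for every $\omega\in\Omega$ and all $X$-valued random variables $x_1,x_2:\Omega\to X$, $$\|T(\omega,x_1(\omega))-T(\omega,x_2(\omega))\|\le \alpha_4(\omega)\|x_1(\omega)-T(\omega,x_2(\omega))\|+\alpha_5(\omega)\|x_2(\omega)-T(\omega,x_1(\omega))\|.$$ Then $T$ has a random fixed point, and it is unique (any two random fixed points of $T$ coincide almost surely).
   Context: An $X$-valued random variable is a map $x:\Omega\to X$ such that $x^{-1}(B)\in\beta$ for every Borel set $B\subseteq X$. A random mapping is a map $T:\Omega\times X\to X$ such that $\omega\mapsto T(\omega,x)$ is an $X$-valued random variable for every fixed $x\in X$. A random mapping $T$ is continuous if the set of $\omega\in\Omega$ for which $x\mapsto T(\omega,x)$ is continuous has $\mu$-measure one. A random fixed point of $T$ is an $X$-valued random variable $x$ with $\mu\{\omega\in\Omega: T(\omega,x(\omega))=x(\omega)\}=1$. *)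

theory Defs
  imports "HOL-Probability.Probability"
begin

definition random_mapping :: "'w measure \<Rightarrow> ('w \<Rightarrow> 'a::topological_space \<Rightarrow> 'a) \<Rightarrow> bool" where
  "random_mapping M T \<longleftrightarrow> (\<forall>x. (\<lambda>w. T w x) \<in> borel_measurable M)"

definition continuous_random_mapping :: "'w measure \<Rightarrow> ('w \<Rightarrow> 'a::topological_space \<Rightarrow> 'a) \<Rightarrow> bool" where
  "continuous_random_mapping M T \<longleftrightarrow> random_mapping M T \<and>
     {w \<in> space M. continuous_on UNIV (T w)} \<in> sets M \<and>
     emeasure M {w \<in> space M. continuous_on UNIV (T w)} = 1"

definition random_fixed_point :: "'w measure \<Rightarrow> ('w \<Rightarrow> 'a::topological_space \<Rightarrow> 'a) \<Rightarrow> ('w \<Rightarrow> 'a) \<Rightarrow> bool" where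
  "random_fixed_point M T x \<longleftrightarrow> x \<in> borel_measurable M \<and>
     {w \<in> space M. T w (x w) = x w} \<in> sets M \<and>
     emeasure M {w \<in> space M. T w (x w) = x w} = 1"

end

theory Submission imports Defs begin

lemma chat_fix:
  fixes f :: "'a::banach \<Rightarrow> 'a" and c :: real
  assumes c0: "0 \<le> c" and c1: "2*c < 1"
    and H: "\<And>u v. norm (f u - f v) \<le> c * (norm (u - f v) + norm (v - f u))"
  shows "\<exists>p. f p = p"
proof -
  define x where "x n = (f ^^ n) 0" for n
  define r where "r = c / (1 - c)"
  have r0: "0 \<le> r" and r1: "r < 1" using c0 c1 by (auto simp: r_def field_simps)
  have step: "norm (x (Suc n) - x (Suc (Suc n))) \<le> r * norm (x n - x (Suc n))" for n
  proof -
    have xs: "x (Suc n) = f (x n)" "x (Suc (Suc n)) = f (x (Suc n))" by (simp_all add: x_def)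
    have "norm (x (Suc n) - x (Suc (Suc n))) \<le> c * (norm (x n - x (Suc (Suc n))) + 0)"
      using H[of "x n" "x (Suc n)"] xs by simp
    also have "\<dots> \<le> c * (norm (x n - x (Suc n)) + norm (x (Suc n) - x (Suc (Suc n))))"
      using c0 by (intro mult_left_mono) (auto intro: norm_diff_triangle_le)
    finally have "(1 - c) * norm (x (Suc n) - x (Suc (Suc n))) \<le> c * norm (x n - x (Suc n))"
      by (simp add: algebra_simps)
    then show ?thesis using c1 by (simp add: r_def field_simps)
  qed
  have geo: "norm (x n - x (Suc n)) \<le> r ^ n * norm (x 0 - x 1)" for n
  proof (induction n)
    case 0 then show ?case by simp
  next
    case (Suc n)
    have "norm (x (Suc n) - x (Suc (Suc n))) \<le> r * norm (x n - x (Suc n))" by (rule step)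
    also have "\<dots> \<le> r * (r ^ n * norm (x 0 - x 1))" using Suc r0 by (intro mult_left_mono)
    finally show ?case by simp
  qed
  have "summable (\<lambda>n. norm (x (Suc n) - x n))"
  proof (rule summable_comparison_test)
    show "\<exists>N. \<forall>n\<ge>N. norm (norm (x (Suc n) - x n)) \<le> r ^ n * norm (x 0 - x 1)"
      using geo by (auto simp: norm_minus_commute)
    show "summable (\<lambda>n. r ^ n * norm (x 0 - x 1))"
      using r0 r1 by (intro summable_mult2 summable_geometric) auto
  qed
  then have "summable (\<lambda>n. x (Suc n) - x n)" by (rule summable_norm_cancel)
  then have "(\<lambda>m. \<Sum>n<m. x (Suc n) - x n) \<longlonglongrightarrow> suminf (\<lambda>n. x (Suc n) - x n)"
    by (rule summable_LIMSEQ)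
  then have "(\<lambda>m. x m - x 0) \<longlonglongrightarrow> suminf (\<lambda>n. x (Suc n) - x n)"
    by (simp add: sum_lessThan_telescope)
  then have "(\<lambda>m. x m - x 0 + x 0) \<longlonglongrightarrow> suminf (\<lambda>n. x (Suc n) - x n) + x 0"
    by (intro tendsto_add) auto
  then obtain q where q: "x \<longlonglongrightarrow> q" by auto
  have q1: "(\<lambda>n. x (Suc n)) \<longlonglongrightarrow> q" using q by (rule LIMSEQ_Suc)
  have bnd: "(1 - c) * norm (f q - q) \<le> (1 + c) * norm (x (Suc n) - q) + c * norm (x n - q)" for n
  proof -
    have xs: "x (Suc n) = f (x n)" by (simp add: x_def)
    have "norm (f q - x (Suc n)) \<le> c * (norm (q - x (Suc n)) + norm (x n - f q))"
      using H[of q "x n"] xs by simp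
    also have "\<dots> \<le> c * (norm (q - x (Suc n)) + (norm (x n - q) + norm (f q - q)))"
    proof -
      have "norm (x n - f q) \<le> norm (x n - q) + norm (q - f q)"
        using norm_triangle_ineq[of "x n - q" "q - f q"] by simp
      then show ?thesis using c0 by (intro mult_left_mono add_left_mono) (auto simp: norm_minus_commute)
    qed
    finally have A: "norm (f q - x (Suc n)) \<le> c * (norm (q - x (Suc n)) + (norm (x n - q) + norm (f q - q)))" .
    have "norm (f q - q) \<le> norm (f q - x (Suc n)) + norm (x (Suc n) - q)"
      by (rule norm_diff_triangle_le) auto
    with A show ?thesis by (simp add: norm_minus_commute algebra_simps)
  qed
  have lim0: "(\<lambda>n. (1 + c) * norm (x (Suc n) - q) + c * norm (x n - q)) \<longlonglongrightarrow> (1 + c) * 0 + c * 0"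
    using tendsto_norm_zero[OF LIM_zero[OF q]] tendsto_norm_zero[OF LIM_zero[OF q1]]
    by (intro tendsto_intros) auto
  have "(1 - c) * norm (f q - q) \<le> (1 + c) * 0 + c * 0"
    by (rule LIMSEQ_le_const[OF lim0]) (use bnd in auto)
  then have "norm (f q - q) \<le> 0" using c1
    by (simp add: mult_le_0_iff)
  then show ?thesis by auto
qed


lemma chat_near:
  fixes f :: "'a::real_normed_vector \<Rightarrow> 'a" and c :: real
  assumes c0: "0 \<le> c" and c1: "2*c < 1" and fp: "f p = p"
    and H: "\<And>u v. norm (f u - f v) \<le> c * (norm (u - f v) + norm (v - f u))"
  shows "(1 - 2*c) * norm (d - p) \<le> norm (d - f d)" and "norm (d - f d) \<le> 2 * norm (d - p)"
proof -
  have "norm (f d - p) \<le> c * (norm (d - p) + norm (p - f d))"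
    using H[of d p] fp by simp
  then have A: "(1 - c) * norm (f d - p) \<le> c * norm (d - p)"
    by (simp add: norm_minus_commute algebra_simps)
  have T1: "norm (d - p) \<le> norm (d - f d) + norm (f d - p)"
    using norm_triangle_ineq[of "d - f d" "f d - p"] by simp
  have T2: "norm (d - f d) \<le> norm (d - p) + norm (f d - p)"
    using norm_triangle_ineq[of "d - p" "p - f d"] by (simp add: norm_minus_commute)
  have "(1 - c) * norm (d - p) \<le> (1 - c) * norm (d - f d) + c * norm (d - p)"
    using mult_left_mono[OF T1, of "1 - c"] A c1 by (simp add: algebra_simps)
  then have "(1 - 2*c) * norm (d - p) \<le> (1 - c) * norm (d - f d)" by (simp add: algebra_simps)
  also have "\<dots> \<le> norm (d - f d)" using c0 c1 by (intro mult_left_le_one_le) auto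
  finally show "(1 - 2*c) * norm (d - p) \<le> norm (d - f d)" .
  have "(1 - c) * norm (f d - p) \<le> (1 - c) * norm (d - p)"
  proof -
    have "c * norm (d - p) \<le> (1 - c) * norm (d - p)" using c1 by (intro mult_right_mono) auto
    with A show ?thesis by linarith
  qed
  then have "norm (f d - p) \<le> norm (d - p)" using c1 by simp
  then show "norm (d - f d) \<le> 2 * norm (d - p)" using T2 by simp
qed

theorem corollary3p5:
  fixes M :: "'w measure"
    and T :: "'w \<Rightarrow> 'a::{banach, second_countable_topology} \<Rightarrow> 'a"
    and \<alpha>4 \<alpha>5 :: "'w \<Rightarrow> real"
  assumes "prob_space M"
    and "complete_measure M"
    and "continuous_random_mapping M T"
    and "\<alpha>4 \<in> borel_measurable M" and "\<alpha>5 \<in> borel_measurable M"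
    and "\<And>w. w \<in> space M \<Longrightarrow> \<alpha>4 w \<ge> 0 \<and> \<alpha>5 w \<ge> 0 \<and> \<alpha>4 w + \<alpha>5 w < 1"
    and "\<And>w x1 x2. w \<in> space M \<Longrightarrow> x1 \<in> borel_measurable M \<Longrightarrow> x2 \<in> borel_measurable M \<Longrightarrow>
           norm (T w (x1 w) - T w (x2 w))
             \<le> \<alpha>4 w * norm (x1 w - T w (x2 w)) + \<alpha>5 w * norm (x2 w - T w (x1 w))"
  shows "(\<exists>x. random_fixed_point M T x) \<and>
         (\<forall>x y. random_fixed_point M T x \<longrightarrow> random_fixed_point M T y \<longrightarrow>
                (AE w in M. x w = y w))"
proof -
  interpret P: prob_space M by fact
  define c where "c w = (\<alpha>4 w + \<alpha>5 w) / 2" for w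
  have c0: "0 \<le> c w" and c1: "2 * c w < 1" if "w \<in> space M" for w
    using assms(6)[OF that] by (auto simp: c_def)
  have Tm[measurable]: "(\<lambda>w. T w z) \<in> borel_measurable M" for z
    using assms(3) by (auto simp: continuous_random_mapping_def random_mapping_def)
  have H: "norm (T w u - T w v) \<le> c w * (norm (u - T w v) + norm (v - T w u))"
    if w: "w \<in> space M" for w u v
  proof -
    have 1: "norm (T w u - T w v) \<le> \<alpha>4 w * norm (u - T w v) + \<alpha>5 w * norm (v - T w u)"
      using assms(7)[OF w, of "\<lambda>_. u" "\<lambda>_. v"] by simp
    have 2: "norm (T w v - T w u) \<le> \<alpha>4 w * norm (v - T w u) + \<alpha>5 w * norm (u - T w v)"
      using assms(7)[OF w, of "\<lambda>_. v" "\<lambda>_. u"] by simp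
    have 3: "norm (T w u - T w v) \<le> \<alpha>4 w * norm (v - T w u) + \<alpha>5 w * norm (u - T w v)"
      using 2 by (simp add: norm_minus_commute)
    have "2 * norm (T w u - T w v) \<le> (\<alpha>4 w + \<alpha>5 w) * (norm (u - T w v) + norm (v - T w u))"
      using 1 3 by (simp add: algebra_simps)
    then show ?thesis unfolding c_def by simp
  qed
  define P where "P w = (SOME p. T w p = p)" for w
  have Pfix: "T w (P w) = P w" if "w \<in> space M" for w
    unfolding P_def by (rule someI_ex, rule chat_fix[OF c0[OF that] c1[OF that] H[OF that]])
  obtain D :: "'a set" where D: "countable D" "\<And>X. open X \<Longrightarrow> X \<noteq> {} \<Longrightarrow> \<exists>d\<in>D. d \<in> X"
    using countable_dense_exists by blast
  have Dne: "D \<noteq> {}" using D(2)[of UNIV] by auto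
  define dd where "dd = from_nat_into D"
  have dd: "\<exists>i. dd i \<in> X" if "open X" "X \<noteq> {}" for X
    using D(2)[OF that] range_from_nat_into[OF Dne D(1)] unfolding dd_def by (metis rangeE)
  define e where "e w = 1 - \<alpha>4 w - \<alpha>5 w" for w
  define m where "m n w = (LEAST i. norm (dd i - T w (dd i)) < e w / (Suc n))" for n w
  define g where "g n w = dd (m n w)" for n w
  have [measurable]: "e \<in> borel_measurable M" unfolding e_def using assms(4,5) by measurable
  have mm: "m n \<in> measurable M (count_space UNIV)" for n
    unfolding m_def by measurable
  have gm: "g n \<in> borel_measurable M" for n
    unfolding g_def by (rule measurable_compose_countable[where f="\<lambda>i w. dd i", OF _ mm]) simp
  have gclose: "norm (g n w - P w) < 1 / real (Suc n)" if w: "w \<in> space M" for n w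
  proof -
    have e0: "e w > 0" "e w = 1 - 2 * c w" using assms(6)[OF w] by (auto simp: e_def c_def field_simps)
    define r where "r = e w / (Suc n)"
    have r0: "r > 0" using e0 by (simp add: r_def)
    obtain i where i: "dd i \<in> ball (P w) (r/2)" using dd[of "ball (P w) (r/2)"] r0 by auto
    have "norm (dd i - T w (dd i)) \<le> 2 * norm (dd i - P w)"
      by (rule chat_near(2)[OF c0[OF w] c1[OF w] Pfix[OF w] H[OF w]])
    also have "\<dots> < r" using i by (simp add: dist_norm norm_minus_commute)
    finally have ex: "\<exists>i. norm (dd i - T w (dd i)) < e w / (Suc n)" unfolding r_def by blast
    have lt: "norm (g n w - T w (g n w)) < e w / (Suc n)"
      unfolding g_def m_def by (rule LeastI_ex[OF ex])
    have "e w * norm (g n w - P w) \<le> norm (g n w - T w (g n w))"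
      using chat_near(1)[OF c0[OF w] c1[OF w] Pfix[OF w] H[OF w]] e0 by simp
    with lt have "e w * norm (g n w - P w) < e w * (1 / Suc n)" by simp
    then show ?thesis using e0(1) by (metis mult_less_cancel_left_pos)
  qed
  have Pm: "P \<in> borel_measurable M"
  proof (rule borel_measurable_LIMSEQ_metric[OF gm])
    fix w assume "w \<in> space M"
    then have "(\<lambda>n. g n w - P w) \<longlonglongrightarrow> 0" by (intro LIMSEQ_norm_0 gclose)
    then show "(\<lambda>n. g n w) \<longlonglongrightarrow> P w" by (rule LIM_zero_cancel)
  qed
  have "random_fixed_point M T P"
  proof -
    have "{w \<in> space M. T w (P w) = P w} = space M" using Pfix by auto
    then show ?thesis unfolding random_fixed_point_def using Pm P.emeasure_space_1 by simp
  qed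
  moreover have "AE w in M. x w = y w" if x: "random_fixed_point M T x" and y: "random_fixed_point M T y" for x y
  proof -
    have ae: "AE w in M. T w (z w) = z w" if "random_fixed_point M T z" for z
    proof -
      have "Measurable.pred M (\<lambda>w. T w (z w) = z w)"
        using that unfolding random_fixed_point_def pred_def by simp
      then show ?thesis using that P.AE_iff_emeasure_eq_1 unfolding random_fixed_point_def by simp
    qed
    have xm: "x \<in> borel_measurable M" and ym: "y \<in> borel_measurable M"
      using x y by (auto simp: random_fixed_point_def)
    show ?thesis using ae[OF x] ae[OF y] AE_space
    proof eventually_elim
      case (elim w)
      have "norm (x w - y w) \<le> \<alpha>4 w * norm (x w - y w) + \<alpha>5 w * norm (y w - x w)"
        using assms(7)[OF elim(3) xm ym] elim(1,2) by simp
      then have "(1 - \<alpha>4 w - \<alpha>5 w) * norm (x w - y w) \<le> 0"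
        by (simp add: norm_minus_commute algebra_simps)
      moreover have "1 - \<alpha>4 w - \<alpha>5 w > 0" using assms(6)[OF elim(3)] by simp
      ultimately show ?case by (simp add: mult_le_0_iff)
    qed
  qed
  ultimately show ?thesis by blast
qed

end
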